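(* Let $K$ be a totally real number field of degree $n$. Suppose an integer plane $A\subseteq\mathbb{R}^n$ is contained in the hyperplane $\{x\in\mathbb{R}^n:\sum_{i=1}^n\tau_i(\delta)x_i=k\}$ for some $\delta\in\mathcal{O}_K^\vee$ and some $k>0$. Then $\mathrm{ID}(A)$ is a divisor of $k$. In particular, if $A$ is contained in such a hyperplane with $k=1$, then $\mathrm{ID}(A)=1$.
   Context: $\tau_1,\dots,\tau_n$ are the real embeddings of $K$; the Minkowski embedding is $\iota_M:K\to\mathbb{R}^n$, $\alpha\mapsto(\tau_1(\alpha),\dots,\tau_n(\alpha))$, and $\Lambda=\iota_M(\mathcal{O}_K)$. The codifferent is $\mathcal{O}_K^\vee=\{\delta\in K:\operatorname{Tr}_{K/\mathbb{Q}}(\delta\alpha)\in\mathbb{Z}\ \forall\alpha\in\mathcal{O}_K\}$. An integer plane is an affine subspace $A\subseteq\mathbb{R}^n$ such that $A\cap\Lambda$ spans (affinely) a lattice of rank equal to $\dim A$. For an integer plane $A$ not containing the origin, its integer distance $\mathrm{ID}(A)$ is the index of the subgroup generated by $A\cap\Lambda$ in the lattice $\Lambda\cap\operatorname{Span}_{\mathbb{R}}(A)$. *)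

theory Defs
  imports "HOL-Analysis.Analysis" "HOL-Computational_Algebra.Polynomial"
begin

text \<open>A number field K is represented as a subfield of the reals (possible since K is
  totally real; this amounts to fixing one real embedding).\<close>

definition subfield_real :: "real set \<Rightarrow> bool" where
  "subfield_real K \<longleftrightarrow> 0 \<in> K \<and> 1 \<in> K \<and> (\<forall>x\<in>K. \<forall>y\<in>K. x + y \<in> K \<and> x * y \<in> K)
     \<and> (\<forall>x\<in>K. - x \<in> K) \<and> (\<forall>x\<in>K. x \<noteq> 0 \<longrightarrow> inverse x \<in> K)"

definition degree_over_Q :: "real set \<Rightarrow> nat \<Rightarrow> bool" where
  "degree_over_Q K n \<longleftrightarrow> (\<exists>b :: nat \<Rightarrow> real. (\<forall>i<n. b i \<in> K)
     \<and> (\<forall>x\<in>K. \<exists>c. (\<forall>i<n. c i \<in> \<rat>) \<and> x = (\<Sum>i<n. c i * b i))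
     \<and> (\<forall>c. (\<forall>i<n. c i \<in> \<rat>) \<and> (\<Sum>i<n. c i * b i) = 0 \<longrightarrow> (\<forall>i<n. c i = 0)))"

definition number_field :: "real set \<Rightarrow> nat \<Rightarrow> bool" where
  "number_field K n \<longleftrightarrow> subfield_real K \<and> degree_over_Q K n"

definition field_embedding :: "real set \<Rightarrow> (real \<Rightarrow> 'b::field) \<Rightarrow> bool" where
  "field_embedding K \<sigma> \<longleftrightarrow> \<sigma> 1 = 1 \<and>
     (\<forall>x\<in>K. \<forall>y\<in>K. \<sigma> (x + y) = \<sigma> x + \<sigma> y \<and> \<sigma> (x * y) = \<sigma> x * \<sigma> y)"

definition totally_real :: "real set \<Rightarrow> bool" where
  "totally_real K \<longleftrightarrow> (\<forall>\<sigma> :: real \<Rightarrow> complex. field_embedding K \<sigma> \<longrightarrow> (\<forall>x\<in>K. \<sigma> x \<in> \<real>))"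

definition real_embeddings_enum :: "real set \<Rightarrow> ('n \<Rightarrow> real \<Rightarrow> real) \<Rightarrow> bool" where
  "real_embeddings_enum K \<tau> \<longleftrightarrow> (\<forall>i. field_embedding K (\<tau> i))
     \<and> (\<forall>i j. (\<forall>x\<in>K. \<tau> i x = \<tau> j x) \<longrightarrow> i = j)
     \<and> (\<forall>\<sigma> :: real \<Rightarrow> real. field_embedding K \<sigma> \<longrightarrow> (\<exists>i. \<forall>x\<in>K. \<sigma> x = \<tau> i x))"

definition algebraic_integer :: "real \<Rightarrow> bool" where
  "algebraic_integer x \<longleftrightarrow> (\<exists>p :: int poly. lead_coeff p = 1 \<and> poly (map_poly of_int p) x = 0)"

definition ring_of_integers :: "real set \<Rightarrow> real set" where
  "ring_of_integers K = {x \<in> K. algebraic_integer x}"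

definition trace :: "('n::finite \<Rightarrow> real \<Rightarrow> real) \<Rightarrow> real \<Rightarrow> real" where
  "trace \<tau> x = (\<Sum>i\<in>UNIV. \<tau> i x)"

definition codifferent :: "real set \<Rightarrow> ('n::finite \<Rightarrow> real \<Rightarrow> real) \<Rightarrow> real set" where
  "codifferent K \<tau> = {\<delta> \<in> K. \<forall>\<alpha> \<in> ring_of_integers K. trace \<tau> (\<delta> * \<alpha>) \<in> \<int>}"

definition minkowski :: "('n::finite \<Rightarrow> real \<Rightarrow> real) \<Rightarrow> real \<Rightarrow> real ^ 'n" where
  "minkowski \<tau> \<alpha> = (\<chi> i. \<tau> i \<alpha>)"

definition minkowski_lattice :: "real set \<Rightarrow> ('n::finite \<Rightarrow> real \<Rightarrow> real) \<Rightarrow> (real ^ 'n) set" where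
  "minkowski_lattice K \<tau> = minkowski \<tau> ` ring_of_integers K"

definition integer_plane :: "('a::real_vector) set \<Rightarrow> 'a set \<Rightarrow> bool" where
  "integer_plane \<Lambda> A \<longleftrightarrow> affine A \<and> A \<noteq> {} \<and> affine hull (A \<inter> \<Lambda>) = A"

definition zspan :: "('a::ab_group_add) set \<Rightarrow> 'a set" where
  "zspan S = \<Inter>{G. S \<subseteq> G \<and> 0 \<in> G \<and> (\<forall>x\<in>G. \<forall>y\<in>G. x - y \<in> G)}"

text \<open>Index of a subgroup H in a group L (number of cosets; 0 if infinite).\<close>
definition group_index :: "('a::ab_group_add) set \<Rightarrow> 'a set \<Rightarrow> nat" where
  "group_index L H = card ((\<lambda>x. (\<lambda>h. x + h) ` H) ` L)"

definition integer_distance :: "('a::real_vector) set \<Rightarrow> 'a set \<Rightarrow> nat" where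
  "integer_distance \<Lambda> A = group_index (\<Lambda> \<inter> span A) (zspan (A \<inter> \<Lambda>))"

end

theory Submission imports Defs Jordan_Normal_Form.Char_Poly
begin

lemma alg_int_from_matrix:
  fixes b :: "nat \<Rightarrow> real" and N :: nat and z :: real and M :: "nat \<Rightarrow> nat \<Rightarrow> int"
  assumes b0: "b i0 \<noteq> 0" and N: "i0 < N"
    and eq: "\<And>i. i < N \<Longrightarrow> z * b i = (\<Sum>j<N. of_int (M i j) * b j)"
  shows "algebraic_integer z"
proof -
  define A :: "int mat" where "A = mat N N (\<lambda>(i,j). M i j)"
  define Ar :: "real mat" where "Ar = map_mat of_int A"
  define v :: "real vec" where "v = vec N b"
  have A: "A \<in> carrier_mat N N" unfolding A_def by simp
  have Ar: "Ar \<in> carrier_mat N N" unfolding Ar_def using A by simp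
  have "Ar *\<^sub>v v = z \<cdot>\<^sub>v v"
  proof (rule eq_vecI)
    fix i assume "i < dim_vec (z \<cdot>\<^sub>v v)"
    hence i: "i < N" unfolding v_def by simp
    have "(Ar *\<^sub>v v) $ i = row Ar i \<bullet> v" using i Ar by simp
    also have "\<dots> = (\<Sum>j\<in>{0..<N}. of_int (M i j) * b j)"
      unfolding scalar_prod_def v_def Ar_def A_def using i by simp
    also have "\<dots> = z * b i" using eq[OF i] by (simp add: atLeast0LessThan)
    finally show "(Ar *\<^sub>v v) $ i = (z \<cdot>\<^sub>v v) $ i" using i unfolding v_def by simp
  qed (use Ar in \<open>simp add: v_def\<close>)
  moreover have "v \<noteq> 0\<^sub>v N"
  proof
    assume "v = 0\<^sub>v N"
    hence "v $ i0 = 0" using N by simp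
    thus False using b0 N unfolding v_def by simp
  qed
  ultimately have "eigenvector Ar v z" unfolding eigenvector_def using Ar by (simp add: v_def)
  hence "eigenvalue Ar z" unfolding eigenvalue_def by blast
  hence "poly (char_poly Ar) z = 0" using eigenvalue_root_char_poly[OF Ar] by simp
  moreover have "char_poly Ar = map_poly of_int (char_poly A)"
    unfolding Ar_def by (rule of_int_hom.char_poly_hom[OF A])
  moreover have "lead_coeff (char_poly A) = 1" using degree_monic_char_poly[OF A] by simp
  ultimately show ?thesis unfolding algebraic_integer_def by metis
qed


lemma algebraic_integer_iff: "algebraic_integer x \<longleftrightarrow> algebraic_int x"
  unfolding algebraic_integer_def algebraic_int_altdef_ipoly by auto

definition zcomb :: "real set \<Rightarrow> real set" where
  "zcomb F = {y. \<exists>c::real\<Rightarrow>int. y = (\<Sum>f\<in>F. of_int (c f) * f)}"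

lemma zcomb_0: "0 \<in> zcomb F"
  unfolding zcomb_def by (rule CollectI, rule exI[of _ "\<lambda>_. 0"]) simp

lemma zcomb_add: "u \<in> zcomb F \<Longrightarrow> v \<in> zcomb F \<Longrightarrow> u + v \<in> zcomb F"
proof -
  assume "u \<in> zcomb F" "v \<in> zcomb F"
  then obtain c c' where "u = (\<Sum>f\<in>F. of_int (c f) * f)" "v = (\<Sum>f\<in>F. of_int (c' f) * f)"
    unfolding zcomb_def by blast
  hence "u + v = (\<Sum>f\<in>F. of_int (c f + c' f) * f)"
    by (simp add: sum.distrib distrib_right)
  thus ?thesis unfolding zcomb_def by (intro CollectI exI[of _ "\<lambda>f. c f + c' f"])
qed

lemma zcomb_smult: "u \<in> zcomb F \<Longrightarrow> of_int m * u \<in> zcomb F"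
proof -
  assume "u \<in> zcomb F"
  then obtain c where "u = (\<Sum>f\<in>F. of_int (c f) * f)"
    unfolding zcomb_def by blast
  hence "of_int m * u = (\<Sum>f\<in>F. of_int (m * c f) * f)"
    by (simp add: sum_distrib_left mult.assoc)
  thus ?thesis unfolding zcomb_def by (intro CollectI exI[of _ "\<lambda>f. m * c f"])
qed

lemma zcomb_mem: assumes "finite F" "f \<in> F" shows "f \<in> zcomb F"
proof -
  have "(\<Sum>g\<in>F. of_int (if g = f then 1 else 0) * g) = (\<Sum>g\<in>F. if g = f then g else 0)"
    by (rule sum.cong) auto
  also have "\<dots> = f" using assms by simp
  finally have "f = (\<Sum>g\<in>F. of_int (if g = f then 1 else 0) * g)" by simp
  thus ?thesis unfolding zcomb_def by (intro CollectI exI[of _ "\<lambda>g. if g = f then 1 else 0"])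
qed

lemma zcomb_sum: assumes "finite I" "\<And>i. i \<in> I \<Longrightarrow> g i \<in> zcomb F"
  shows "sum g I \<in> zcomb F"
  using assms by (induction I rule: finite_induct) (auto intro: zcomb_0 zcomb_add)

lemma zcomb_mult:
  assumes F: "finite F" and G: "finite G" and u: "u \<in> zcomb F" and v: "v \<in> zcomb G"
  shows "u * v \<in> zcomb ((\<lambda>(f,g). f * g) ` (F \<times> G))"
proof -
  let ?P = "(\<lambda>(f,g). f * g) ` (F \<times> G)"
  have P: "finite ?P" using F G by simp
  obtain c c' where cu: "u = (\<Sum>f\<in>F. of_int (c f) * f)" and cv: "v = (\<Sum>g\<in>G. of_int (c' g) * g)"
    using u v unfolding zcomb_def by blast
  have "u * v = (\<Sum>f\<in>F. \<Sum>g\<in>G. of_int (c f) * f * (of_int (c' g) * g))"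
    unfolding cu cv by (rule sum_product)
  also have "\<dots> = (\<Sum>f\<in>F. \<Sum>g\<in>G. of_int (c f * c' g) * (f * g))"
    by (simp add: algebra_simps)
  also have "\<dots> \<in> zcomb ?P"
  proof (rule zcomb_sum[OF F], rule zcomb_sum[OF G])
    fix f g assume "f \<in> F" "g \<in> G"
    hence "f * g \<in> ?P" by force
    thus "of_int (c f * c' g) * (f * g) \<in> zcomb ?P" by (intro zcomb_smult zcomb_mem[OF P])
  qed
  finally show ?thesis .
qed

lemma alg_int_powers:
  assumes "algebraic_integer x"
  shows "\<exists>d>0. \<forall>n. x ^ n \<in> zcomb ((\<lambda>k. x ^ k) ` {..<d})"
proof -
  obtain p :: "int poly" where lc: "lead_coeff p = 1" and r: "poly (map_poly of_int p) x = 0"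
    using assms unfolding algebraic_integer_def by blast
  define d where "d = degree p"
  define F where "F = (\<lambda>k. x ^ k) ` {..<d}"
  have F: "finite F" unfolding F_def by simp
  have "0 = (\<Sum>i\<le>d. of_int (coeff p i) * x ^ i)"
    using r unfolding poly_altdef by (simp add: d_def)
  also have "\<dots> = (\<Sum>i<d. of_int (coeff p i) * x ^ i) + x ^ d"
    using lc by (simp add: lessThan_Suc_atMost[symmetric] d_def)
  finally have xd: "x ^ d = (\<Sum>i<d. of_int (- coeff p i) * x ^ i)"
    by (simp add: sum_negf eq_neg_iff_add_eq_0 add.commute)
  have d0: "d > 0"
  proof (rule ccontr)
    assume "\<not> d > 0"
    hence "d = 0" by simp
    with xd show False by simp
  qed
  have xdZ: "x ^ d \<in> zcomb F" unfolding xd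
  proof (rule zcomb_sum)
    fix i assume "i \<in> {..<d}"
    hence "x ^ i \<in> F" unfolding F_def by blast
    thus "of_int (- coeff p i) * x ^ i \<in> zcomb F" by (intro zcomb_smult zcomb_mem[OF F])
  qed simp
  have mulF: "x * f \<in> zcomb F" if fF: "f \<in> F" for f
  proof -
    obtain k where k: "k < d" "f = x ^ k" using fF unfolding F_def by blast
    show ?thesis
    proof (cases "Suc k < d")
      case True
      hence "x ^ Suc k \<in> F" unfolding F_def by blast
      hence "x ^ Suc k \<in> zcomb F" by (rule zcomb_mem[OF F])
      thus ?thesis using k by simp
    next
      case False hence dk: "d = Suc k" using k by simp
      have "x * f = x ^ d" by (simp only: dk k(2) power_Suc)
      thus ?thesis using xdZ by (simp only:)
    qed
  qed
  have mul: "x * u \<in> zcomb F" if uF: "u \<in> zcomb F" for u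
  proof -
    obtain c where c: "u = (\<Sum>f\<in>F. of_int (c f) * f)" using uF unfolding zcomb_def by blast
    have "x * u = (\<Sum>f\<in>F. of_int (c f) * (x * f))" unfolding c
      by (simp add: sum_distrib_left algebra_simps)
    also have "\<dots> \<in> zcomb F" by (intro zcomb_sum[OF F] zcomb_smult mulF)
    finally show ?thesis .
  qed
  have "x ^ n \<in> zcomb F" for n
  proof (induction n)
    case 0
    have "x ^ 0 \<in> F" unfolding F_def by (rule image_eqI[where x=0]) (use d0 in simp_all)
    thus ?case by (rule zcomb_mem[OF F])
  next
    case (Suc n) thus ?case using mul by simp
  qed
  thus ?thesis using d0 unfolding F_def by blast
qed

lemma alg_int_add:
  assumes x: "algebraic_integer x" and y: "algebraic_integer y"
  shows "algebraic_integer (x + y)"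
proof -
  obtain d where d: "d > 0" "\<And>n. x ^ n \<in> zcomb ((\<lambda>k. x ^ k) ` {..<d})"
    using alg_int_powers[OF x] by blast
  obtain e where e: "e > 0" "\<And>n. y ^ n \<in> zcomb ((\<lambda>k. y ^ k) ` {..<e})"
    using alg_int_powers[OF y] by blast
  define P where "P = (\<lambda>(f,g). f * g) ` ((\<lambda>k. x ^ k) ` {..<d} \<times> (\<lambda>k. y ^ k) ` {..<e})"
  have P: "finite P" unfolding P_def by simp
  have xy: "x ^ i * y ^ j \<in> zcomb P" for i j
    unfolding P_def by (rule zcomb_mult) (use d e in auto)
  have clos: "(x + y) * q \<in> zcomb P" if qP: "q \<in> P" for q
  proof -
    obtain i j where q: "q = x ^ i * y ^ j" using qP unfolding P_def by auto
    have "(x + y) * q = x ^ Suc i * y ^ j + x ^ i * y ^ Suc j" unfolding q by (simp add: algebra_simps)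
    have "x ^ Suc i * y ^ j + x ^ i * y ^ Suc j \<in> zcomb P" by (rule zcomb_add[OF xy xy])
    thus ?thesis by (subst \<open>(x + y) * q = _\<close>)
  qed
  have x0: "x ^ 0 \<in> (\<lambda>k. x ^ k) ` {..<d}" by (rule image_eqI[where x=0]) (use d in simp_all)
  have y0: "y ^ 0 \<in> (\<lambda>k. y ^ k) ` {..<e}" by (rule image_eqI[where x=0]) (use e in simp_all)
  have "(x^0, y^0) \<in> (\<lambda>k. x ^ k) ` {..<d} \<times> (\<lambda>k. y ^ k) ` {..<e}" using x0 y0 by (rule SigmaI)
  hence "(\<lambda>(f,g). f * g) (x^0, y^0) \<in> P" unfolding P_def by (rule imageI)
  hence oneP: "1 \<in> P" by simp
  define bs where "bs = sorted_list_of_set P"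
  define N where "N = length bs"
  have dist: "distinct bs" and setbs: "set bs = P" unfolding bs_def using P by auto
  have sumconv: "(\<Sum>f\<in>P. h f) = (\<Sum>j<N. h (bs ! j))" for h :: "real \<Rightarrow> real"
  proof -
    have "(\<Sum>f\<in>P. h f) = sum_list (map h bs)" using sum.distinct_set_conv_list[OF dist, of h] setbs by simp
    also have "\<dots> = (\<Sum>j<N. h (bs ! j))" unfolding N_def sum_list_sum_nth by (simp add: atLeast0LessThan)
    finally show ?thesis .
  qed
  have "\<forall>i. \<exists>c. i < N \<longrightarrow> (x + y) * bs ! i = (\<Sum>f\<in>P. of_int (c f) * f)"
  proof
    fix i show "\<exists>c. i < N \<longrightarrow> (x + y) * bs ! i = (\<Sum>f\<in>P. of_int (c f) * f)"
    proof (cases "i < N")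
      case True
      hence "bs ! i \<in> set bs" unfolding N_def by (rule nth_mem)
      hence "bs ! i \<in> P" using setbs by simp
      hence "(x + y) * bs ! i \<in> zcomb P" by (rule clos)
      then obtain c where "(x + y) * bs ! i = (\<Sum>f\<in>P. of_int (c f) * f)" unfolding zcomb_def by blast
      thus ?thesis by blast
    qed auto
  qed
  hence "\<exists>C. \<forall>i. i < N \<longrightarrow> (x + y) * bs ! i = (\<Sum>f\<in>P. of_int (C i f) * f)" by (rule choice)
  then obtain C where C: "\<And>i. i < N \<Longrightarrow> (x + y) * bs ! i = (\<Sum>f\<in>P. of_int (C i f) * f)"
    by blast
  obtain i0 where i0: "i0 < N" "bs ! i0 = 1" using oneP setbs unfolding N_def by (auto simp: in_set_conv_nth)
  show ?thesis
  proof (rule alg_int_from_matrix[where b = "\<lambda>i. bs ! i" and ?i0.0 = i0 and N = N and M = "\<lambda>i j. C i (bs ! j)"])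
    fix i assume "i < N"
    thus "(x + y) * bs ! i = (\<Sum>j<N. of_int (C i (bs ! j)) * bs ! j)" using C sumconv by simp
  qed (use i0 in auto)
qed

lemma alg_int_diff:
  assumes "algebraic_integer x" "algebraic_integer y"
  shows "algebraic_integer (x - y)"
proof -
  have "algebraic_integer (- y)" using assms(2) by (simp add: algebraic_integer_iff)
  from alg_int_add[OF assms(1) this] show ?thesis by simp
qed


definition grp :: "'a::real_vector set \<Rightarrow> bool" where
  "grp G \<longleftrightarrow> 0 \<in> G \<and> (\<forall>x\<in>G. \<forall>y\<in>G. x - y \<in> G)"

lemma grp_0: "grp G \<Longrightarrow> 0 \<in> G" unfolding grp_def by blast
lemma grp_diff: "grp G \<Longrightarrow> x \<in> G \<Longrightarrow> y \<in> G \<Longrightarrow> x - y \<in> G" unfolding grp_def by blast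
lemma grp_neg: "grp G \<Longrightarrow> x \<in> G \<Longrightarrow> - x \<in> G"
  using grp_diff[of G 0 x] grp_0[of G] by simp
lemma grp_add: "grp G \<Longrightarrow> x \<in> G \<Longrightarrow> y \<in> G \<Longrightarrow> x + y \<in> G"
  using grp_diff[of G x "- y"] grp_neg[of G y] by simp

lemma grp_nat: assumes "grp G" "x \<in> G" shows "of_nat n *\<^sub>R x \<in> G"
proof (induction n)
  case 0 thus ?case using grp_0[OF assms(1)] by simp
next
  case (Suc n)
  have "of_nat (Suc n) *\<^sub>R x = of_nat n *\<^sub>R x + x" by (simp add: algebra_simps)
  thus ?case using grp_add[OF assms(1) Suc assms(2)] by simp
qed

lemma grp_int: assumes "grp G" "x \<in> G" shows "of_int m *\<^sub>R x \<in> G"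
proof (cases "m \<ge> 0")
  case True
  then obtain n where "m = int n" by (rule nonneg_int_cases)
  thus ?thesis using grp_nat[OF assms, of n] by simp
next
  case False
  hence "0 \<le> - m" by simp
  then obtain n where "- m = int n" by (rule nonneg_int_cases)
  hence "m = - int n" by simp
  thus ?thesis using grp_neg[OF assms(1) grp_nat[OF assms, of n]] by simp
qed

lemma zspan_least: "S \<subseteq> G \<Longrightarrow> grp G \<Longrightarrow> zspan S \<subseteq> G"
  unfolding zspan_def grp_def by blast

lemma zspan_grp: "grp (zspan S)"
  unfolding zspan_def grp_def by blast

lemma zspan_base: "S \<subseteq> zspan S"
  unfolding zspan_def by blast

lemma coset_eq:
  assumes "grp H" "x - y \<in> H"
  shows "(\<lambda>h. x + h) ` H = (\<lambda>h. y + h) ` H"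
proof
  show "(\<lambda>h. x + h) ` H \<subseteq> (\<lambda>h. y + h) ` H"
  proof
    fix z assume "z \<in> (\<lambda>h. x + h) ` H"
    then obtain h where h: "h \<in> H" "z = x + h" by blast
    have "(x - y) + h \<in> H" using grp_add[OF assms(1) assms(2) h(1)] .
    moreover have "z = y + ((x - y) + h)" using h by simp
    ultimately show "z \<in> (\<lambda>h. y + h) ` H" by blast
  qed
next
  show "(\<lambda>h. y + h) ` H \<subseteq> (\<lambda>h. x + h) ` H"
  proof
    fix z assume "z \<in> (\<lambda>h. y + h) ` H"
    then obtain h where h: "h \<in> H" "z = y + h" by blast
    have "h - (x - y) \<in> H" using grp_diff[OF assms(1) h(1) assms(2)] .
    moreover have "z = x + (h - (x - y))" using h by simp
    ultimately show "z \<in> (\<lambda>h. x + h) ` H" by blast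
  qed
qed

lemma coset_eq_imp:
  assumes "grp H" "(\<lambda>h. x + h) ` H = (\<lambda>h. y + h) ` H"
  shows "x - y \<in> H"
proof -
  have "x + 0 \<in> (\<lambda>h. x + h) ` H" using grp_0[OF assms(1)] by blast
  hence "x \<in> (\<lambda>h. y + h) ` H" using assms(2) by simp
  then obtain h where "h \<in> H" "x = y + h" by blast
  thus ?thesis by simp
qed

lemma affine_lift:
  fixes f :: "'a::real_vector \<Rightarrow> real"
  assumes A: "affine A" and a: "a \<in> A" and f: "linear f" and fk: "\<And>y. y \<in> A \<Longrightarrow> f y = k"
    and k: "k \<noteq> 0" and w: "w \<in> span A" and fw: "f w = 0"
  shows "a + w \<in> A"
proof -
  define S where "S = (\<lambda>x. x - a) ` A"
  have S: "subspace S" unfolding S_def by (rule affine_diffs_subspace_subtract[OF A a])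
  have "A \<subseteq> span (insert a S)"
  proof
    fix y assume y: "y \<in> A"
    have "y - 1 *\<^sub>R a \<in> span S" using y unfolding S_def by (auto intro: span_base)
    thus "y \<in> span (insert a S)" unfolding span_insert by blast
  qed
  hence "span A \<subseteq> span (insert a S)" by (rule span_minimal) (rule subspace_span)
  with w have "w \<in> span (insert a S)" by blast
  then obtain c where "w - c *\<^sub>R a \<in> span S" unfolding span_insert by blast
  moreover have "span S = S" using S by (simp add: span_eq_iff)
  ultimately have "w - c *\<^sub>R a \<in> S" by simp
  then obtain y where y: "y \<in> A" "w - c *\<^sub>R a = y - a" unfolding S_def by blast
  have "f (w - c *\<^sub>R a) = f w - c * f a" using f by (simp add: linear_diff linear_scale)
  also have "\<dots> = - c * k" using fw fk[OF a] by simp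
  finally have "- c * k = f y - f a" using y(2) f by (simp add: linear_diff)
  also have "\<dots> = 0" using fk[OF a] fk[OF y(1)] by simp
  finally have "c = 0" using k by simp
  hence "a + w = y" using y(2) by (simp add: algebra_simps)
  thus ?thesis using y(1) by simp
qed

theorem corollary2p2:
  fixes K :: "real set" and \<tau> :: "'n::finite \<Rightarrow> real \<Rightarrow> real"
    and A :: "(real ^ 'n) set" and \<delta> k :: real
  assumes "number_field K CARD('n)"
    and "totally_real K"
    and "real_embeddings_enum K \<tau>"
    and "integer_plane (minkowski_lattice K \<tau>) A"
    and "\<delta> \<in> codifferent K \<tau>"
    and "k > 0"
    and "A \<subseteq> {x. (\<Sum>i\<in>UNIV. \<tau> i \<delta> * x $ i) = k}"
  shows "(\<exists>m::int. k = real (integer_distance (minkowski_lattice K \<tau>) A) * of_int m)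
    \<and> (k = 1 \<longrightarrow> integer_distance (minkowski_lattice K \<tau>) A = 1)"
proof -
  note a_nf = assms(1) and a_er = assms(3) and a_ip = assms(4) and a_cd = assms(5)
    and a_k = assms(6) and a_A = assms(7)
  define \<Lambda> where "\<Lambda> = minkowski_lattice K \<tau>"
  define f where "f = (\<lambda>x::real^'n. \<Sum>i\<in>UNIV. \<tau> i \<delta> * x $ i)"
  have sf: "subfield_real K" using a_nf unfolding number_field_def by blast
  have K0: "0 \<in> K" and Kadd: "\<And>x y. x \<in> K \<Longrightarrow> y \<in> K \<Longrightarrow> x + y \<in> K"
    and Kmul: "\<And>x y. x \<in> K \<Longrightarrow> y \<in> K \<Longrightarrow> x * y \<in> K"
    and Kneg: "\<And>x. x \<in> K \<Longrightarrow> - x \<in> K"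
    using sf unfolding subfield_real_def by auto
  have Kdiff: "x - y \<in> K" if "x \<in> K" "y \<in> K" for x y
    using Kadd[OF that(1) Kneg[OF that(2)]] by simp
  have emb: "field_embedding K (\<tau> i)" for i using a_er unfolding real_embeddings_enum_def by blast
  have \<tau>add: "\<tau> i (x + y) = \<tau> i x + \<tau> i y" if "x \<in> K" "y \<in> K" for i x y
    using emb[of i] that unfolding field_embedding_def by blast
  have \<tau>mul: "\<tau> i (x * y) = \<tau> i x * \<tau> i y" if "x \<in> K" "y \<in> K" for i x y
    using emb[of i] that unfolding field_embedding_def by blast
  have \<tau>0: "\<tau> i 0 = 0" for i using \<tau>add[OF K0 K0, of i] by simp
  have \<tau>neg: "\<tau> i (- y) = - \<tau> i y" if "y \<in> K" for i y
    using \<tau>add[OF that Kneg[OF that], of i] \<tau>0[of i] by simp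
  have \<tau>diff: "\<tau> i (x - y) = \<tau> i x - \<tau> i y" if "x \<in> K" "y \<in> K" for i x y
    using \<tau>add[OF that(1) Kneg[OF that(2)], of i] \<tau>neg[OF that(2), of i] by simp
  have O0: "0 \<in> ring_of_integers K"
    unfolding ring_of_integers_def using K0 by (simp add: algebraic_integer_iff)
  have Odiff: "x - y \<in> ring_of_integers K" if "x \<in> ring_of_integers K" "y \<in> ring_of_integers K" for x y
    using that Kdiff alg_int_diff unfolding ring_of_integers_def by auto
  have grpL: "grp \<Lambda>"
    unfolding grp_def
  proof (intro conjI ballI)
    have "minkowski \<tau> 0 = 0" unfolding minkowski_def by (simp add: Finite_Cartesian_Product.vec_eq_iff \<tau>0)
    thus "0 \<in> \<Lambda>" unfolding \<Lambda>_def minkowski_lattice_def using O0 by (metis image_eqI)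
  next
    fix x y assume "x \<in> \<Lambda>" "y \<in> \<Lambda>"
    then obtain \<alpha> \<beta> where ab: "\<alpha> \<in> ring_of_integers K" "\<beta> \<in> ring_of_integers K"
      "x = minkowski \<tau> \<alpha>" "y = minkowski \<tau> \<beta>" unfolding \<Lambda>_def minkowski_lattice_def by blast
    have "\<alpha> \<in> K" "\<beta> \<in> K" using ab unfolding ring_of_integers_def by auto
    hence "x - y = minkowski \<tau> (\<alpha> - \<beta>)" using ab unfolding minkowski_def by (simp add: Finite_Cartesian_Product.vec_eq_iff \<tau>diff)
    thus "x - y \<in> \<Lambda>" unfolding \<Lambda>_def minkowski_lattice_def using Odiff[OF ab(1,2)] by blast
  qed
  have \<delta>K: "\<delta> \<in> K" and \<delta>tr: "\<And>\<alpha>. \<alpha> \<in> ring_of_integers K \<Longrightarrow> trace \<tau> (\<delta> * \<alpha>) \<in> \<int>"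
    using a_cd unfolding codifferent_def by auto
  have fint: "f x \<in> \<int>" if xLam: "x \<in> \<Lambda>" for x
  proof -
    obtain \<alpha> where al: "\<alpha> \<in> ring_of_integers K" "x = minkowski \<tau> \<alpha>"
      using xLam unfolding \<Lambda>_def minkowski_lattice_def by blast
    have "\<alpha> \<in> K" using al unfolding ring_of_integers_def by auto
    hence "f x = trace \<tau> (\<delta> * \<alpha>)" unfolding f_def trace_def al(2) minkowski_def
      using \<tau>mul[OF \<delta>K] by simp
    thus ?thesis using \<delta>tr[OF al(1)] by simp
  qed
  have flin: "linear f" unfolding f_def
    by (rule linearI) (simp_all add: sum.distrib sum_distrib_left algebra_simps)
  have fdiff: "f (x - y) = f x - f y" for x y using flin by (simp add: linear_diff)
  have fscale: "f (c *\<^sub>R x) = c * f x" for c x using flin by (simp add: linear_scale)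
  have fA: "f y = k" if "y \<in> A" for y using a_A that unfolding f_def by blast
  have affA: "affine A" and hull: "affine hull (A \<inter> \<Lambda>) = A" and Ane: "A \<noteq> {}"
    using a_ip unfolding integer_plane_def \<Lambda>_def by auto
  have "A \<inter> \<Lambda> \<noteq> {}" using hull Ane by auto
  then obtain a where a: "a \<in> A" "a \<in> \<Lambda>" by blast
  have fa: "f a = k" using fA[OF a(1)] .
  obtain kk :: int where "f a = of_int kk" using fint[OF a(2)] by (auto elim: Ints_cases)
  hence kk: "k = of_int kk" using fa by simp
  have kk0: "kk > 0" using a_k kk by simp
  define L where "L = \<Lambda> \<inter> span A"
  define H where "H = zspan (A \<inter> \<Lambda>)"
  have grpLL: "grp L" unfolding L_def grp_def using grpL
    by (auto intro: grp_0 grp_diff span_zero span_diff)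
  have grpH: "grp H" unfolding H_def by (rule zspan_grp)
  have aL: "a \<in> L" unfolding L_def using a by (auto intro: span_base)
  have HL: "H \<subseteq> L" unfolding H_def
    by (rule zspan_least[OF _ grpLL]) (auto simp: L_def intro: span_base)
  have char: "x \<in> H \<longleftrightarrow> (\<exists>m::int. f x = of_int m * k)" if xL: "x \<in> L" for x
  proof
    assume "x \<in> H"
    moreover have "H \<subseteq> {x. \<exists>m::int. f x = of_int m * k}" unfolding H_def
    proof (rule zspan_least)
      show "A \<inter> \<Lambda> \<subseteq> {x. \<exists>m::int. f x = of_int m * k}"
        using fA by (auto intro!: exI[of _ 1])
      show "grp {x. \<exists>m::int. f x = of_int m * k}" unfolding grp_def
      proof (intro conjI ballI)
        show "0 \<in> {x. \<exists>m::int. f x = of_int m * k}"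
          using flin by (auto simp: linear_0 intro!: exI[of _ 0])
      next
        fix x y assume "x \<in> {x. \<exists>m::int. f x = of_int m * k}" "y \<in> {x. \<exists>m::int. f x = of_int m * k}"
        then obtain m1 m2 :: int where "f x = of_int m1 * k" "f y = of_int m2 * k" by blast
        hence "f (x - y) = of_int (m1 - m2) * k" by (simp add: fdiff algebra_simps)
        thus "x - y \<in> {x. \<exists>m::int. f x = of_int m * k}" by blast
      qed
    qed
    ultimately show "\<exists>m::int. f x = of_int m * k" by blast
  next
    assume "\<exists>m::int. f x = of_int m * k"
    then obtain m :: int where m: "f x = of_int m * k" by blast
    define w where "w = x - of_int m *\<^sub>R a"
    have maL: "of_int m *\<^sub>R a \<in> L" by (rule grp_int[OF grpLL aL])
    have wL: "w \<in> L" unfolding w_def by (rule grp_diff[OF grpLL xL maL])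
    have fw: "f w = 0" unfolding w_def using m fa by (simp add: fdiff fscale)
    have wsp: "w \<in> span A" and wLam: "w \<in> \<Lambda>" using wL unfolding L_def by auto
    have k0: "k \<noteq> 0" using a_k by simp
    have "a + w \<in> A" by (rule affine_lift[OF affA a(1) flin fA k0 wsp fw])
    moreover have "a + w \<in> \<Lambda>" by (rule grp_add[OF grpL a(2) wLam])
    ultimately have "a + w \<in> A \<inter> \<Lambda>" by (rule IntI)
    hence "a + w \<in> H" unfolding H_def by (rule subsetD[OF zspan_base])
    moreover have "a \<in> H" unfolding H_def by (rule subsetD[OF zspan_base]) (use a in blast)
    ultimately have wH: "w \<in> H" using grp_diff[OF grpH, of "a + w" a] by simp
    have "of_int m *\<^sub>R a \<in> H" using grp_int[OF grpH \<open>a \<in> H\<close>] .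
    hence "w + of_int m *\<^sub>R a \<in> H" using grp_add[OF grpH wH] by blast
    thus "x \<in> H" unfolding w_def by simp
  qed
  have fLint: "\<exists>t::int. f x = of_int t" if "x \<in> L" for x
    using fint[of x] that unfolding L_def by (auto elim: Ints_cases)
  define dn where "dn = (LEAST n::nat. n > 0 \<and> (\<exists>x\<in>L. f x = of_nat n))"
  have ex: "nat kk > 0 \<and> (\<exists>x\<in>L. f x = of_nat (nat kk))" using kk0 aL fa kk by auto
  have dn: "dn > 0 \<and> (\<exists>x\<in>L. f x = of_nat dn)" unfolding dn_def by (rule LeastI_ex) (use ex in blast)
  then obtain x0 where x0: "x0 \<in> L" "f x0 = of_nat dn" by blast
  have dn0: "dn > 0" using dn by blast
  have mult: "\<exists>q::int. f x = of_int q * of_nat dn" if xL: "x \<in> L" for x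
  proof -
    obtain t :: int where t: "f x = of_int t" using fLint[OF xL] by blast
    define q where "q = t div int dn"
    define r where "r = t mod int dn"
    have tqr: "t = q * int dn + r" unfolding q_def r_def by simp
    have r0: "0 \<le> r" "r < int dn" unfolding r_def using dn0 by auto
    define y where "y = x - of_int q *\<^sub>R x0"
    have yL: "y \<in> L" unfolding y_def by (rule grp_diff[OF grpLL xL grp_int[OF grpLL x0(1)]])
    have fy: "f y = of_int r" unfolding y_def using t x0(2) tqr by (simp add: fdiff fscale algebra_simps)
    have "r = 0"
    proof (rule ccontr)
      assume "r \<noteq> 0"
      hence "nat r > 0 \<and> (\<exists>x\<in>L. f x = of_nat (nat r))" using r0 yL fy by auto
      hence "dn \<le> nat r" unfolding dn_def by (rule Least_le)
      thus False using r0 by linarith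
    qed
    thus ?thesis using t tqr by auto
  qed
  obtain n0 :: int where "f a = of_int n0 * of_nat dn" using mult[OF aL] by blast
  hence "real_of_int kk = real_of_int (n0 * int dn)" using fa kk by simp
  hence kkn: "kk = n0 * int dn" by (simp only: of_int_eq_iff)
  have n0pos: "n0 > 0" using kkn kk0 dn0 by (simp add: zero_less_mult_iff)
  define \<phi> where "\<phi> = (\<lambda>i::int. (\<lambda>h. of_int i *\<^sub>R x0 + h) ` H)"
  define C where "C = (\<lambda>x. (\<lambda>h. x + h) ` H) ` L"
  have ixL: "of_int i *\<^sub>R x0 \<in> L" for i by (rule grp_int[OF grpLL x0(1)])
  have fk: "f z = of_int (j * n0) * of_nat dn" if "f z = of_int j * k" for z j
    using that kk kkn by simp
  have "bij_betw \<phi> {0..<n0} C"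
  proof (rule bij_betw_imageI)
    show "inj_on \<phi> {0..<n0}"
    proof (rule inj_onI)
      fix i j assume ij: "i \<in> {0..<n0}" "j \<in> {0..<n0}" "\<phi> i = \<phi> j"
      have "of_int i *\<^sub>R x0 - of_int j *\<^sub>R x0 \<in> H"
        by (rule coset_eq_imp[OF grpH]) (use ij(3) in \<open>simp add: \<phi>_def\<close>)
      moreover have "of_int i *\<^sub>R x0 - of_int j *\<^sub>R x0 \<in> L" by (rule grp_diff[OF grpLL ixL ixL])
      ultimately obtain m :: int where "f (of_int i *\<^sub>R x0 - of_int j *\<^sub>R x0) = of_int m * k"
        using char by blast
      hence "of_int (i - j) * of_nat dn = (of_int (m * n0) * of_nat dn :: real)"
        using x0(2) kk kkn by (simp add: fdiff fscale algebra_simps)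
      hence "real_of_int (i - j) = real_of_int (m * n0)" using dn0 by simp
      hence "i - j = m * n0" by (simp only: of_int_eq_iff)
      moreover have "\<bar>i - j\<bar> < n0" using ij(1,2) by auto
      ultimately have "\<bar>m\<bar> * n0 < 1 * n0" using n0pos by (simp add: abs_mult)
      hence "\<bar>m\<bar> < 1" by (simp only: mult_less_cancel_right_pos[OF n0pos])
      hence "m = 0" by simp
      thus "i = j" using \<open>i - j = m * n0\<close> by simp
    qed
  next
    show "\<phi> ` {0..<n0} = C"
    proof
      show "\<phi> ` {0..<n0} \<subseteq> C" unfolding \<phi>_def C_def using ixL by blast
    next
      show "C \<subseteq> \<phi> ` {0..<n0}"
      proof
        fix c assume "c \<in> C"
        then obtain x where xL: "x \<in> L" and c: "c = (\<lambda>h. x + h) ` H" unfolding C_def by blast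
        obtain q :: int where q: "f x = of_int q * of_nat dn" using mult[OF xL] by blast
        define i where "i = q mod n0"
        have i: "i \<in> {0..<n0}" unfolding i_def using n0pos by auto
        have qi: "q - i = (q div n0) * n0" unfolding i_def by (simp add: minus_mod_eq_mult_div)
        have "x - of_int i *\<^sub>R x0 \<in> L" by (rule grp_diff[OF grpLL xL ixL])
        moreover have "f (x - of_int i *\<^sub>R x0) = of_int (q div n0) * k"
        proof -
          have "f (x - of_int i *\<^sub>R x0) = of_int (q - i) * of_nat dn"
            using q x0(2) by (simp add: fdiff fscale algebra_simps)
          also have "\<dots> = of_int (q div n0) * k" unfolding qi kk kkn by simp
          finally show ?thesis .
        qed
        ultimately have "x - of_int i *\<^sub>R x0 \<in> H" using char by blast
        hence "c = \<phi> i" unfolding c \<phi>_def by (rule coset_eq[OF grpH])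
        thus "c \<in> \<phi> ` {0..<n0}" using i by blast
      qed
    qed
  qed
  hence "card {0..<n0} = card C" by (rule bij_betw_same_card)
  hence "card C = nat n0" by simp
  hence ID: "integer_distance (minkowski_lattice K \<tau>) A = nat n0"
    unfolding integer_distance_def group_index_def C_def L_def H_def \<Lambda>_def by simp
  have part1: "k = real (integer_distance (minkowski_lattice K \<tau>) A) * of_int (int dn)"
    unfolding ID kk kkn using n0pos by simp
  have part2: "integer_distance (minkowski_lattice K \<tau>) A = 1" if "k = 1"
  proof -
    have "real_of_int kk = real_of_int 1" using that kk by simp
    hence "kk = 1" by (simp only: of_int_eq_iff)
    hence "n0 * int dn = 1" using kkn by simp
    hence "n0 = 1" using n0pos dn0 by (simp add: pos_zmult_eq_1_iff)
    thus ?thesis unfolding ID by simp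
  qed
  show ?thesis using part1 part2 by blast
qed

end
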